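(* Let $(X,\to)$ be a transition system over $A$ (of arbitrary branching type). Then $\mathit{lo}_t$ is $c_t$-compatible, i.e. $\mathit{lo}_t(c_t(\mathcal S))\subseteq c_t(\mathit{lo}_t(\mathcal S))$ for every $\mathcal S\subseteq\mathcal P(X)$.
   Context: $\Diamond_a(S)=\{x\mid\exists x'\in S\colon x\xrightarrow{a}x'\}$; $\mathit{lo}_t(\mathcal S)=\bigcup_{a\in A}\{\Diamond_a(S)\mid S\in\mathcal S\}\cup\{X\}$. $\alpha_t(\mathcal S)=\{(X_1,X_2)\in\mathcal P(X)^2\mid\forall S\in\mathcal S\colon(X_1\cap S\neq\emptyset\iff X_2\cap S\neq\emptyset)\}$, $\gamma_t(R)=\{S\subseteq X\mid\forall(X_1,X_2)\in R\colon(X_1\cap S\neq\emptyset\iff X_2\cap S\neq\emptyset)\}$ for equivalences $R$ on $\mathcal P(X)$, and $c_t=\gamma_t\circ\alpha_t$. *)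

theory Defs
  imports Main
begin

text \<open>A transition system over label set A: carrier X, transition relation
  T \<subseteq> X \<times> A \<times> X (arbitrary branching, no finiteness assumptions).\<close>

definition diamond :: "'x set \<Rightarrow> ('x \<times> 'a \<times> 'x) set \<Rightarrow> 'a \<Rightarrow> 'x set \<Rightarrow> 'x set" where
  "diamond X T a S = {x \<in> X. \<exists>x' \<in> S. (x, a, x') \<in> T}"

definition lo_t :: "'x set \<Rightarrow> 'a set \<Rightarrow> ('x \<times> 'a \<times> 'x) set \<Rightarrow> 'x set set \<Rightarrow> 'x set set" where
  "lo_t X A T \<S> = (\<Union>a \<in> A. {diamond X T a S | S. S \<in> \<S>}) \<union> {X}"

definition alpha_t :: "'x set \<Rightarrow> 'x set set \<Rightarrow> ('x set \<times> 'x set) set" where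
  "alpha_t X \<S> = {(X1, X2). X1 \<subseteq> X \<and> X2 \<subseteq> X \<and>
     (\<forall>S \<in> \<S>. (X1 \<inter> S \<noteq> {} \<longleftrightarrow> X2 \<inter> S \<noteq> {}))}"

definition gamma_t :: "'x set \<Rightarrow> ('x set \<times> 'x set) set \<Rightarrow> 'x set set" where
  "gamma_t X R = {S. S \<subseteq> X \<and>
     (\<forall>(X1, X2) \<in> R. (X1 \<inter> S \<noteq> {} \<longleftrightarrow> X2 \<inter> S \<noteq> {}))}"

definition c_t :: "'x set \<Rightarrow> 'x set set \<Rightarrow> 'x set set" where
  "c_t X \<S> = gamma_t X (alpha_t X \<S>)"

end

theory Submission
  imports Defs
begin

theorem mainTheorem11:
  fixes X :: "'x set" and A :: "'a set" and T :: "('x \<times> 'a \<times> 'x) set"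
    and \<S> :: "'x set set"
  assumes "T \<subseteq> X \<times> A \<times> X"
    and "\<S> \<subseteq> Pow X"
  shows "lo_t X A T (c_t X \<S>) \<subseteq> c_t X (lo_t X A T \<S>)"
proof
  fix D assume D: "D \<in> lo_t X A T (c_t X \<S>)"
  have XL: "X \<in> lo_t X A T \<S>" by (simp add: lo_t_def)
  have DL: "diamond X T a S \<in> lo_t X A T \<S>" if "a \<in> A" "S \<in> \<S>" for a S
    using that unfolding lo_t_def by blast
  show "D \<in> c_t X (lo_t X A T \<S>)"
  proof (cases "D = X")
    case True
    then show ?thesis using XL unfolding c_t_def gamma_t_def alpha_t_def by auto
  next
    case False
    then obtain a S' where a: "a \<in> A" and S': "S' \<in> c_t X \<S>" and Dd: "D = diamond X T a S'"
      using D unfolding lo_t_def by blast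
    define post where "post Y = {x'. \<exists>x\<in>Y. (x, a, x') \<in> T}" for Y
    have key: "Y \<inter> diamond X T a S \<noteq> {} \<longleftrightarrow> post Y \<inter> S \<noteq> {}" if "Y \<subseteq> X" for Y S
      using that unfolding post_def diamond_def by blast
    have postX: "post Y \<subseteq> X" for Y using assms(1) unfolding post_def by blast
    have "(X1 \<inter> D \<noteq> {} \<longleftrightarrow> X2 \<inter> D \<noteq> {})"
      if R: "(X1, X2) \<in> alpha_t X (lo_t X A T \<S>)" for X1 X2
    proof -
      have sub: "X1 \<subseteq> X" "X2 \<subseteq> X" using R unfolding alpha_t_def by auto
      have "(post X1, post X2) \<in> alpha_t X \<S>"
      proof -
        have "post X1 \<inter> S \<noteq> {} \<longleftrightarrow> post X2 \<inter> S \<noteq> {}" if "S \<in> \<S>" for S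
        proof -
          have "X1 \<inter> diamond X T a S \<noteq> {} \<longleftrightarrow> X2 \<inter> diamond X T a S \<noteq> {}"
            using R DL[OF a that] unfolding alpha_t_def by auto
          then show ?thesis using key[OF sub(1), of S] key[OF sub(2), of S] by simp
        qed
        then show ?thesis unfolding alpha_t_def using postX by auto
      qed
      then have "post X1 \<inter> S' \<noteq> {} \<longleftrightarrow> post X2 \<inter> S' \<noteq> {}"
        using S' unfolding c_t_def gamma_t_def by auto
      then show ?thesis unfolding Dd using key[OF sub(1), of S'] key[OF sub(2), of S'] by simp
    qed
    moreover have "D \<subseteq> X" using Dd unfolding diamond_def by auto
    ultimately show ?thesis unfolding c_t_def gamma_t_def by auto
  qed
qed

end
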